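(* Let $K$ be a number field, $G$ a finitely generated torsion-free subgroup of $K^\times$ of positive rank $r$, and let $D$ be a constant with $C(n)\le D$ for all $n\ge1$ (such a constant exists). Then for every real $y\ge1$, \[\sum_{t\le y}\sum_{n=1}^\infty\frac{\mu(n)}{[K_{nt,nt}:K]}=1+O\!\left(\frac{D}{y^r}\right),\] where the implied constant is absolute.
   Context: $K_{n,n}:=K(\zeta_n,G^{1/n})$, with $\zeta_n$ a primitive $n$-th root of unity and $G^{1/n}$ the set of all $n$-th roots of elements of $G$. $C(n):=\dfrac{\varphi(n)n^r}{[K_{n,n}:K]}$, with $\varphi$ Euler's totient function; $\mu$ is the Möbius function. *)

theory Defs
  imports "HOL-Analysis.Analysis" "HOL-Computational_Algebra.Squarefree"
          "HOL-Number_Theory.Number_Theory"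
begin

definition moebius :: "nat \<Rightarrow> int" where
  "moebius n = (if n = 0 \<or> \<not> squarefree n then 0 else (-1) ^ card (prime_factors n))"

definition is_subfield :: "complex set \<Rightarrow> bool" where
  "is_subfield F \<longleftrightarrow> 0 \<in> F \<and> 1 \<in> F \<and> (\<forall>x\<in>F. \<forall>y\<in>F. x + y \<in> F \<and> x * y \<in> F)
     \<and> (\<forall>x\<in>F. - x \<in> F) \<and> (\<forall>x\<in>F. x \<noteq> 0 \<longrightarrow> inverse x \<in> F)"

definition is_basis_over :: "complex set \<Rightarrow> complex set \<Rightarrow> complex set \<Rightarrow> bool" where
  "is_basis_over F L B \<longleftrightarrow> finite B \<and> B \<subseteq> L
     \<and> (\<forall>c. (\<forall>b\<in>B. c b \<in> F) \<longrightarrow> (\<Sum>b\<in>B. c b * b) = 0 \<longrightarrow> (\<forall>b\<in>B. c b = 0))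
     \<and> (\<forall>x\<in>L. \<exists>c. (\<forall>b\<in>B. c b \<in> F) \<and> x = (\<Sum>b\<in>B. c b * b))"

text \<open>Degree [L:F] of a field extension L/F (0 if infinite).\<close>
definition ext_degree :: "complex set \<Rightarrow> complex set \<Rightarrow> nat" where
  "ext_degree L F = (LEAST d. \<exists>B. is_basis_over F L B \<and> card B = d)"

definition number_field :: "complex set \<Rightarrow> bool" where
  "number_field K \<longleftrightarrow> is_subfield K \<and> (\<exists>B. is_basis_over (\<rat>::complex set) K B)"

definition gen_field :: "complex set \<Rightarrow> complex set" where
  "gen_field S = \<Inter> {F. is_subfield F \<and> S \<subseteq> F}"

text \<open>K_{n,n} = K(zeta_n, G^{1/n}), zeta_n = exp(2 pi i/n).\<close>
definition kummer_field :: "complex set \<Rightarrow> complex set \<Rightarrow> nat \<Rightarrow> complex set" where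
  "kummer_field K G n = gen_field (K \<union> {cis (2 * pi / real n)} \<union> {x. x ^ n \<in> G})"

definition mult_subgroup :: "complex set \<Rightarrow> complex set \<Rightarrow> bool" where
  "mult_subgroup K G \<longleftrightarrow> G \<subseteq> K - {0} \<and> 1 \<in> G \<and> (\<forall>x\<in>G. \<forall>y\<in>G. x * y \<in> G)
     \<and> (\<forall>x\<in>G. inverse x \<in> G)"

definition fin_gen :: "complex set \<Rightarrow> bool" where
  "fin_gen G \<longleftrightarrow> (\<exists>S. finite S \<and> S \<subseteq> G \<and>
     (\<forall>x\<in>G. \<exists>e::complex \<Rightarrow> int. x = (\<Prod>s\<in>S. s powi e s)))"

definition torsion_free :: "complex set \<Rightarrow> bool" where
  "torsion_free G \<longleftrightarrow> (\<forall>x\<in>G. \<forall>n::nat. n > 0 \<longrightarrow> x ^ n = 1 \<longrightarrow> x = 1)"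

definition mult_indep :: "nat \<Rightarrow> (nat \<Rightarrow> complex) \<Rightarrow> bool" where
  "mult_indep k x \<longleftrightarrow> (\<forall>e::nat \<Rightarrow> int. (\<Prod>i<k. x i powi e i) = 1 \<longrightarrow> (\<forall>i<k. e i = 0))"

definition has_rank :: "complex set \<Rightarrow> nat \<Rightarrow> bool" where
  "has_rank G r \<longleftrightarrow> (\<exists>x. (\<forall>i<r. x i \<in> G) \<and> mult_indep r x)
     \<and> (\<forall>x. (\<forall>i<Suc r. x i \<in> G) \<longrightarrow> \<not> mult_indep (Suc r) x)"

definition C_const :: "complex set \<Rightarrow> complex set \<Rightarrow> nat \<Rightarrow> nat \<Rightarrow> real" where
  "C_const K G r n = real (totient n) * real n ^ r / real (ext_degree (kummer_field K G n) K)"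

end

theory Submission
  imports Defs
begin

lemma moebius_prime_mult:
  assumes p: "prime (p::nat)" and nd: "\<not> p dvd d" and d: "d > 0"
  shows "moebius (p * d) = - moebius d"
proof -
  have cop: "coprime p d" using p nd by (simp add: prime_imp_coprime)
  have pd0: "p * d \<noteq> 0" using p d by auto
  have sq: "squarefree (p*d) \<longleftrightarrow> squarefree d"
    using squarefree_mult_coprime[OF cop squarefree_prime[OF p]] squarefree_mono[of d "p*d"] by auto
  have pf: "prime_factors (p*d) = insert p (prime_factors d)"
    using prime_factors_product[of p d] p d by (auto simp: prime_prime_factors)
  have "p \<notin> prime_factors d" using nd by (auto dest: in_prime_factors_imp_dvd)
  then have "card (prime_factors (p*d)) = Suc (card (prime_factors d))" by (simp add: pf)
  then show ?thesis using sq pd0 d unfolding moebius_def by auto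
qed

lemma moebius_sq:
  assumes p: "prime (p::nat)" and dv: "p^2 dvd d"
  shows "moebius d = 0"
proof -
  have "\<not> p dvd 1" using p not_prime_unit by blast
  then have "\<not> squarefree d" using not_squarefreeI[OF dv] by auto
  then show ?thesis unfolding moebius_def by auto
qed

lemma moebius_abs_le: "\<bar>moebius n\<bar> \<le> 1"
  unfolding moebius_def by (auto simp: abs_mult)

lemma moebius_abs_le_real: "\<bar>real_of_int (moebius n)\<bar> \<le> 1"
proof -
  have "real_of_int \<bar>moebius n\<bar> \<le> real_of_int 1" using moebius_abs_le[of n] by (rule of_int_le_iff[THEN iffD2])
  then show ?thesis by simp
qed

lemma moebius_mult_le: "0 \<le> x \<Longrightarrow> \<bar>real_of_int (moebius n) * x\<bar> \<le> (x::real)"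
  using moebius_abs_le_real[of n] by (simp add: abs_mult mult_left_le_one_le)

lemma moebius_1: "moebius 1 = 1"
  unfolding moebius_def by auto

lemma moebius_divisor_sum:
  assumes m: "m > (1::nat)"
  shows "(\<Sum>d | d dvd m. moebius d) = 0"
proof -
  obtain p where p: "prime p" "p dvd m" using prime_factor_nat[of m] m by auto
  have m0: "m \<noteq> 0" using m by auto
  have fin: "finite {d. d dvd m}" using m0 by simp
  define A where "A = {d. d dvd m \<and> \<not> p dvd d}"
  define B where "B = {d. d dvd m \<and> p dvd d}"
  define B' where "B' = {d. d dvd m \<and> p dvd d \<and> \<not> p^2 dvd d}"
  have finA: "finite A" "finite B" using fin unfolding A_def B_def by (auto intro: finite_subset)
  have split: "{d. d dvd m} = A \<union> B" "A \<inter> B = {}" unfolding A_def B_def by auto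
  have "(\<Sum>d | d dvd m. moebius d) = sum moebius A + sum moebius B"
    using split finA by (simp add: sum.union_disjoint)
  moreover have "sum moebius B = sum moebius B'"
  proof (rule sum.mono_neutral_right)
    show "finite B" by fact
    show "B' \<subseteq> B" by (auto simp: B_def B'_def)
    show "\<forall>i\<in>B - B'. moebius i = 0" by (auto simp: B_def B'_def intro: moebius_sq[OF p(1)])
  qed
  moreover have "B' = (\<lambda>d. p * d) ` A"
  proof (rule equalityI; rule subsetI)
    fix x assume "x \<in> B'"
    then have x: "x dvd m" "p dvd x" "\<not> p^2 dvd x" by (auto simp: B'_def)
    then obtain e where e: "x = p * e" by blast
    have "\<not> p dvd e" using x(3) e by (auto simp: power2_eq_square)
    moreover have "e dvd m" using x(1) e by (metis dvd_mult_right)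
    ultimately show "x \<in> (\<lambda>d. p * d) ` A" using e by (auto simp: A_def)
  next
    fix x assume "x \<in> (\<lambda>d. p * d) ` A"
    then obtain e where e: "x = p * e" "e dvd m" "\<not> p dvd e" by (auto simp: A_def)
    have "coprime p e" using p e by (simp add: prime_imp_coprime)
    then have "p * e dvd m" using p(2) e(2) by (simp add: divides_mult)
    moreover have "\<not> p^2 dvd p * e" using e(3) p(1)
      by (simp add: power2_eq_square prime_gt_0_nat)
    ultimately show "x \<in> B'" using e by (auto simp: B'_def)
  qed
  moreover have "inj_on (\<lambda>d. p * d) A" using p(1) by (auto simp: inj_on_def prime_gt_0_nat)
  moreover have "sum (\<lambda>d. moebius (p*d)) A = - sum moebius A"
  proof -
    have "\<And>d. d \<in> A \<Longrightarrow> moebius (p*d) = - moebius d"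
      using m0 by (intro moebius_prime_mult[OF p(1)]) (auto simp: A_def intro: Nat.gr0I)
    then show ?thesis by (simp add: sum_negf)
  qed
  ultimately show ?thesis by (simp add: sum.reindex)
qed

lemma totient_mult_ge: "totient a * totient b \<le> totient (a * b)"
proof (cases "a = 0 \<or> b = 0")
  case True then show ?thesis by auto
next
  case False
  then have g: "gcd a b > 0" by auto
  have "totient (a * b) * totient (gcd a b) = totient a * totient b * gcd a b" by (rule totient_gcd)
  moreover have "totient (gcd a b) \<le> gcd a b" by (rule totient_le)
  ultimately have "totient a * totient b * gcd a b \<le> totient (a*b) * gcd a b"
    by (metis mult_le_mono2)
  then show ?thesis using g mult_le_cancel2 by blast
qed

definition gfun :: "nat \<Rightarrow> real" where
  "gfun t = 1 / (real (totient t) * real t)"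

lemma gfun_nonneg: "0 \<le> gfun t" unfolding gfun_def by simp

lemma gfun_mult: "gfun (a * b) \<le> gfun a * gfun b"
proof (cases "a = 0 \<or> b = 0")
  case True then show ?thesis by (auto simp: gfun_def)
next
  case False
  have "real (totient a) * real (totient b) \<le> real (totient (a*b))"
    using totient_mult_ge[of a b] by (metis of_nat_le_iff of_nat_mult)
  then have le: "real (totient a) * real a * (real (totient b) * real b) \<le> real (totient (a*b)) * real (a*b)"
    using False by (simp add: mult_right_mono algebra_simps)
  have pos: "0 < real (totient a) * real a * (real (totient b) * real b)" using False by simp
  have "gfun a * gfun b = 1 / (real (totient a) * real a * (real (totient b) * real b))"
    by (simp add: gfun_def)
  moreover have "gfun (a*b) = 1 / (real (totient (a*b)) * real (a*b))" by (simp add: gfun_def)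
  ultimately show ?thesis using frac_le[OF _ _ pos le, of 1 1] by simp
qed

lemma t_over_totient:
  assumes t: "t > 0"
  shows "real t \<le> real (totient t) * (\<Sum>d | d dvd t. 1 / real (totient (t div d)))"
proof -
  have "real t = (\<Sum>d | d dvd t. real (totient d))"
    using totient_divisor_sum[of t] by (metis of_nat_sum)
  also have "\<dots> \<le> (\<Sum>d | d dvd t. real (totient t) * (1 / real (totient (t div d))))"
  proof (rule sum_mono)
    fix d assume "d \<in> {d. d dvd t}"
    then have d: "d dvd t" by simp
    then have "t div d > 0" using t by (metis dvd_div_eq_0_iff neq0_conv)
    then have pos: "real (totient (t div d)) > 0" by simp
    have "totient d * totient (t div d) \<le> totient t"
      using totient_mult_ge[of d "t div d"] d by simp
    then have "real (totient d) * real (totient (t div d)) \<le> real (totient t)"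
      by (metis of_nat_le_iff of_nat_mult)
    then show "real (totient d) \<le> real (totient t) * (1 / real (totient (t div d)))"
      using pos by (simp add: field_simps)
  qed
  also have "\<dots> = real (totient t) * (\<Sum>d | d dvd t. 1 / real (totient (t div d)))"
    by (simp add: sum_distrib_left)
  finally show ?thesis .
qed

lemma gfun_divisor_bound:
  assumes t: "t > 0"
  shows "gfun t \<le> (\<Sum>d | d dvd t. 1 / (real (totient (t div d)) * real (t div d)^2 * real d ^ 2))"
proof -
  have pt: "real (totient t) > 0" using t by simp
  have "gfun t = 1 / (real (totient t) * real t)" by (simp add: gfun_def)
  also have "\<dots> \<le> (real (totient t) * (\<Sum>d | d dvd t. 1 / real (totient (t div d)))) / (real (totient t) * real t ^ 2)"
  proof -
    have "1 / (real (totient t) * real t) = real t / (real (totient t) * real t ^ 2)"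
      using t by (simp add: power2_eq_square)
    also have "\<dots> \<le> (real (totient t) * (\<Sum>d | d dvd t. 1 / real (totient (t div d)))) / (real (totient t) * real t ^ 2)"
      by (rule divide_right_mono[OF t_over_totient[OF t]]) simp
    finally show ?thesis .
  qed
  also have "\<dots> = (\<Sum>d | d dvd t. 1 / real (totient (t div d))) / real t ^ 2"
    using pt by simp
  also have "\<dots> = (\<Sum>d | d dvd t. 1 / (real (totient (t div d)) * real (t div d)^2 * real d ^ 2))"
    unfolding sum_divide_distrib
  proof (rule sum.cong[OF refl])
    fix d assume "d \<in> {d. d dvd t}"
    then have "t = (t div d) * d" by simp
    then have "real t ^ 2 = real (t div d)^2 * real d ^ 2"
      by (metis of_nat_mult power_mult_distrib)
    then show "1 / real (totient (t div d)) / real t ^ 2 = 1 / (real (totient (t div d)) * real (t div d)^2 * real d ^ 2)"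
      by simp
  qed
  finally show ?thesis .
qed

lemma divsum_pairs:
  fixes t M :: nat and h :: "nat \<Rightarrow> nat \<Rightarrow> real"
  assumes t: "1 \<le> t" "t \<le> M"
  shows "(\<Sum>d | d dvd t. h d (t div d)) = (\<Sum>d\<in>{1..M}. \<Sum>e\<in>{1..M}. if d * e = t then h d e else (0::real))"
proof -
  have inner: "(\<Sum>e\<in>{1..M}. if d * e = t then h d e else 0) = (if d dvd t then h d (t div d) else 0)"
    if d: "d \<in> {1..M}" for d
  proof (cases "d dvd t")
    case True
    have d0: "d > 0" using d by auto
    have eq: "\<And>e. (d * e = t) = (e = t div d)" using True d0 by auto
    have "t div d \<le> M" using t(2) div_le_dividend le_trans by blast
    moreover have "t div d \<noteq> 0" using True t(1) by (metis dvd_div_eq_0_iff not_one_le_zero)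
    ultimately have "t div d \<in> {1..M}" by auto
    then show ?thesis using True by (simp add: eq)
  next
    case False
    then have "\<And>e. d * e \<noteq> t" by auto
    then show ?thesis using False by simp
  qed
  have sub: "{d. d dvd t} \<subseteq> {1..M}"
  proof
    fix x assume "x \<in> {d. d dvd t}"
    then have x: "x dvd t" by simp
    then have "x \<le> t" using t(1) by (intro dvd_imp_le) auto
    moreover have "x \<noteq> 0" using x t(1) by auto
    ultimately show "x \<in> {1..M}" using t(2) by auto
  qed
  have "(\<Sum>d\<in>{1..M}. \<Sum>e\<in>{1..M}. if d * e = t then h d e else (0::real))
      = (\<Sum>d\<in>{1..M}. if d dvd t then h d (t div d) else 0)" using inner by simp
  also have "\<dots> = (\<Sum>d \<in> {d\<in>{1..M}. d dvd t}. h d (t div d))" by (rule sum.inter_filter[symmetric]) simp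
  also have "{d\<in>{1..M}. d dvd t} = {d. d dvd t}" using sub by auto
  finally show ?thesis by simp
qed

lemma sum_swap_delta:
  fixes A I J :: "nat set" and h :: "nat \<Rightarrow> nat \<Rightarrow> real"
  assumes "finite A" "finite I" "finite J"
  shows "(\<Sum>m\<in>A. \<Sum>d\<in>I. \<Sum>e\<in>J. if d * e = m then h d e else (0::real))
       = (\<Sum>d\<in>I. \<Sum>e\<in>J. if d * e \<in> A then h d e else 0)"
proof -
  have "(\<Sum>m\<in>A. \<Sum>d\<in>I. \<Sum>e\<in>J. if d * e = m then h d e else (0::real))
       = (\<Sum>d\<in>I. \<Sum>m\<in>A. \<Sum>e\<in>J. if d * e = m then h d e else (0::real))"
    by (rule sum.swap)
  also have "\<dots> = (\<Sum>d\<in>I. \<Sum>e\<in>J. \<Sum>m\<in>A. if d * e = m then h d e else (0::real))"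
    by (rule sum.cong[OF refl], rule sum.swap)
  also have "\<dots> = (\<Sum>d\<in>I. \<Sum>e\<in>J. if d * e \<in> A then h d e else 0)"
    using assms by simp
  finally show ?thesis .
qed

lemma sq_sum_aux:
  assumes k: "1 \<le> k0" "k0 \<le> M"
  shows "(\<Sum>d\<in>{k0..M}. 1 / real d ^ 2) \<le> 2 / real k0 - 1 / real M"
  using k(2)
proof (induction M)
  case 0 then show ?case using k by simp
next
  case (Suc M)
  show ?case
  proof (cases "k0 = Suc M")
    case True
    have "real k0 \<le> real k0 ^ 2" using k(1) by (simp add: power2_eq_square)
    then have "1 / real k0 ^ 2 \<le> 1 / real k0" using k(1) by (intro frac_le) auto
    then show ?thesis using True by simp
  next
    case False
    then have kM: "k0 \<le> M" using Suc.prems by simp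
    have M1: "M \<ge> 1" using kM k(1) by simp
    have "{k0..Suc M} = insert (Suc M) {k0..M}" using kM by auto
    then have "(\<Sum>d\<in>{k0..Suc M}. 1 / real d ^ 2) = 1 / real (Suc M) ^ 2 + (\<Sum>d\<in>{k0..M}. 1 / real d ^ 2)"
      by simp
    also have "\<dots> \<le> 1 / real (Suc M) ^ 2 + (2 / real k0 - 1 / real M)"
      using Suc.IH[OF kM] by simp
    also have "\<dots> \<le> 2 / real k0 - 1 / real (Suc M)"
    proof -
      have Mp: "real M > 0" using M1 by simp
      have e1: "1 / real M - 1 / real (Suc M) = 1 / (real M * real (Suc M))"
        using Mp by (simp add: field_simps)
      have "real M * real (Suc M) \<le> real (Suc M) ^ 2" by (simp add: power2_eq_square)
      then have "1 / real (Suc M) ^ 2 \<le> 1 / (real M * real (Suc M))"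
        using Mp by (intro frac_le) auto
      then have "1 / real (Suc M) ^ 2 \<le> 1 / real M - 1 / real (Suc M)" using e1 by simp
      then show ?thesis by simp
    qed
    finally show ?thesis .
  qed
qed

lemma sq_sum_le:
  assumes k: "1 \<le> k0"
  shows "(\<Sum>d\<in>{k0..M}. 1 / real d ^ 2) \<le> 2 / real k0"
proof (cases "k0 \<le> M")
  case True
  have "0 \<le> 1 / real M" by simp
  then show ?thesis using sq_sum_aux[OF k True] by linarith
next
  case False then show ?thesis by simp
qed

lemma sq_sum_z:
  assumes z: "z > 0"
  shows "(\<Sum>d\<in>{1..M}. if z \<le> real d then 1 / real d ^ 2 else 0) \<le> 2 / z"
proof -
  define k0 where "k0 = nat \<lceil>z\<rceil>"
  have c1: "\<lceil>z\<rceil> \<ge> 1" using z by (simp add: one_le_ceiling)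
  have k1: "1 \<le> k0" using c1 by (simp add: k0_def le_nat_iff)
  have rk: "real k0 = of_int \<lceil>z\<rceil>" using c1 unfolding k0_def by simp
  have kz: "z \<le> real k0" unfolding rk by (rule le_of_int_ceiling)
  have iff: "\<And>d. z \<le> real d \<longleftrightarrow> k0 \<le> d"
  proof -
    fix d
    have "z \<le> real d \<longleftrightarrow> \<lceil>z\<rceil> \<le> int d" by (metis ceiling_le_iff of_int_of_nat_eq)
    also have "\<dots> \<longleftrightarrow> k0 \<le> d" unfolding k0_def by (rule nat_le_iff[symmetric])
    finally show "z \<le> real d \<longleftrightarrow> k0 \<le> d" .
  qed
  have eq: "{d\<in>{1..M}. z \<le> real d} = {k0..M}"
    unfolding iff using k1 by auto
  have "(\<Sum>d\<in>{1..M}. if z \<le> real d then 1 / real d ^ 2 else 0) = (\<Sum>d\<in>{d\<in>{1..M}. z \<le> real d}. 1 / real d ^ 2)"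
    by (rule sum.inter_filter[symmetric]) simp
  also have "\<dots> = (\<Sum>d\<in>{k0..M}. 1 / real d ^ 2)" by (simp only: eq)
  also have "\<dots> \<le> 2 / real k0" by (rule sq_sum_le[OF k1])
  also have "\<dots> \<le> 2 / z" by (rule divide_left_mono) (use z kz in auto)
  finally show ?thesis .
qed

lemma gsum_le:
  assumes m: "1 \<le> m"
  shows "(\<Sum>t\<in>{m..M}. gfun t) \<le> (\<Sum>e\<in>{1..M}. (1 / (real (totient e) * real e ^ 2)) *
            (\<Sum>d\<in>{1..M}. if m \<le> d * e then 1 / real d ^ 2 else 0))"
proof -
  define w where "w d e = 1 / (real (totient e) * real e ^ 2 * real d ^ 2)" for d e :: nat
  have w0: "\<And>d e. 0 \<le> w d e" by (simp add: w_def)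
  have "(\<Sum>t\<in>{m..M}. gfun t) \<le> (\<Sum>t\<in>{m..M}. \<Sum>d | d dvd t. w d (t div d))"
    by (rule sum_mono) (use m gfun_divisor_bound in \<open>auto simp: w_def\<close>)
  also have "\<dots> = (\<Sum>t\<in>{m..M}. \<Sum>d\<in>{1..M}. \<Sum>e\<in>{1..M}. if d * e = t then w d e else 0)"
    by (rule sum.cong[OF refl], rule divsum_pairs) (use m in auto)
  also have "\<dots> = (\<Sum>d\<in>{1..M}. \<Sum>e\<in>{1..M}. if d * e \<in> {m..M} then w d e else 0)"
    by (rule sum_swap_delta) auto
  also have "\<dots> \<le> (\<Sum>d\<in>{1..M}. \<Sum>e\<in>{1..M}. if m \<le> d * e then w d e else 0)"
    by (intro sum_mono) (auto simp: w0)
  also have "\<dots> = (\<Sum>e\<in>{1..M}. \<Sum>d\<in>{1..M}. if m \<le> d * e then w d e else 0)"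
    by (rule sum.swap)
  also have "\<dots> = (\<Sum>e\<in>{1..M}. (1 / (real (totient e) * real e ^ 2)) *
            (\<Sum>d\<in>{1..M}. if m \<le> d * e then 1 / real d ^ 2 else 0))"
    unfolding sum_distrib_left by (intro sum.cong refl) (simp add: w_def)
  finally show ?thesis .
qed

lemma gsum_total: "(\<Sum>t\<in>{1..M}. gfun t) \<le> 4"
proof -
  have "(\<Sum>t\<in>{1..M}. gfun t) \<le> (\<Sum>e\<in>{1..M}. (1 / (real (totient e) * real e ^ 2)) *
            (\<Sum>d\<in>{1..M}. if 1 \<le> d * e then 1 / real d ^ 2 else 0))"
    by (rule gsum_le) simp
  also have "\<dots> \<le> (\<Sum>e\<in>{1..M}. (1 / real e ^ 2) * 2)"
  proof (rule sum_mono)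
    fix e assume e: "e \<in> {1..M}"
    have a: "1 / (real (totient e) * real e ^ 2) \<le> 1 / real e ^ 2"
    proof -
      have "1 \<le> real (totient e)" using e by (simp add: Suc_le_eq)
      then have "real e ^ 2 \<le> real (totient e) * real e ^ 2" using e by simp
      then show ?thesis using e by (intro frac_le) auto
    qed
    have "(\<Sum>d\<in>{1..M}. if 1 \<le> d * e then 1 / real d ^ 2 else 0) \<le> (\<Sum>d\<in>{1..M}. 1 / real d ^ 2)"
      by (intro sum_mono) auto
    also have "\<dots> \<le> 2" using sq_sum_le[of 1 M] by simp
    finally have b: "(\<Sum>d\<in>{1..M}. if 1 \<le> d * e then 1 / real d ^ 2 else 0) \<le> 2" .
    show "(1 / (real (totient e) * real e ^ 2)) * (\<Sum>d\<in>{1..M}. if 1 \<le> d * e then 1 / real d ^ 2 else 0)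
          \<le> (1 / real e ^ 2) * 2"
      by (rule mult_mono[OF a b]) (auto intro: sum_nonneg)
  qed
  also have "\<dots> = 2 * (\<Sum>e\<in>{1..M}. 1 / real e ^ 2)" by (simp add: sum_distrib_left mult.commute)
  also have "\<dots> \<le> 4" using sq_sum_le[of 1 M] by simp
  finally show ?thesis .
qed

lemma gsum_tail:
  assumes m: "1 \<le> m"
  shows "(\<Sum>t\<in>{m..M}. gfun t) \<le> 8 / real m"
proof -
  have "(\<Sum>t\<in>{m..M}. gfun t) \<le> (\<Sum>e\<in>{1..M}. (1 / (real (totient e) * real e ^ 2)) *
            (\<Sum>d\<in>{1..M}. if m \<le> d * e then 1 / real d ^ 2 else 0))"
    by (rule gsum_le[OF m])
  also have "\<dots> \<le> (\<Sum>e\<in>{1..M}. (1 / (real (totient e) * real e ^ 2)) * (2 * real e / real m))"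
  proof (rule sum_mono)
    fix e assume e: "e \<in> {1..M}"
    have epos: "real e > 0" using e by simp
    have z: "real m / real e > 0" using e m by simp
    have "(\<Sum>d\<in>{1..M}. if m \<le> d * e then 1 / real d ^ 2 else 0)
        = (\<Sum>d\<in>{1..M}. if real m / real e \<le> real d then 1 / real d ^ 2 else 0)"
    proof (intro sum.cong refl)
      fix d
      have "(m \<le> d * e) = (real m \<le> real d * real e)" by (metis of_nat_le_iff of_nat_mult)
      also have "\<dots> = (real m / real e \<le> real d)" using epos by (simp add: divide_simps)
      finally show "(if m \<le> d * e then 1 / real d ^ 2 else 0) = (if real m / real e \<le> real d then 1 / real d ^ 2 else 0)"
        by simp
    qed
    also have "\<dots> \<le> 2 / (real m / real e)" by (rule sq_sum_z[OF z])
    also have "\<dots> = 2 * real e / real m" by simp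
    finally have b: "(\<Sum>d\<in>{1..M}. if m \<le> d * e then 1 / real d ^ 2 else 0) \<le> 2 * real e / real m" .
    show "(1 / (real (totient e) * real e ^ 2)) * (\<Sum>d\<in>{1..M}. if m \<le> d * e then 1 / real d ^ 2 else 0)
        \<le> (1 / (real (totient e) * real e ^ 2)) * (2 * real e / real m)"
      by (rule mult_left_mono[OF b]) simp
  qed
  also have "\<dots> = (2 / real m) * (\<Sum>e\<in>{1..M}. gfun e)"
    unfolding sum_distrib_left
  proof (intro sum.cong refl)
    fix e assume e: "e \<in> {1..M}"
    then show "1 / (real (totient e) * real e ^ 2) * (2 * real e / real m) = 2 / real m * gfun e"
      by (simp add: gfun_def power2_eq_square field_simps)
  qed
  also have "\<dots> \<le> (2 / real m) * 4" by (rule mult_left_mono[OF gsum_total]) simp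
  finally show ?thesis by simp
qed

lemma finite_identity:
  fixes a :: "nat \<Rightarrow> real"
  assumes a1: "a 1 = 1" and M: "1 \<le> M"
  shows "(\<Sum>t\<in>{1..M}. \<Sum>n\<in>{1..M}. if n * t \<le> M then real_of_int (moebius n) * a (n * t) else 0) = 1"
proof -
  define h where "h n t = real_of_int (moebius n) * a (n * t)" for n t
  have "(\<Sum>t\<in>{1..M}. \<Sum>n\<in>{1..M}. if n * t \<le> M then real_of_int (moebius n) * a (n * t) else 0)
      = (\<Sum>n\<in>{1..M}. \<Sum>t\<in>{1..M}. if n * t \<le> M then h n t else 0)"
    unfolding h_def by (rule sum.swap)
  also have "\<dots> = (\<Sum>n\<in>{1..M}. \<Sum>t\<in>{1..M}. if n * t \<in> {1..M} then h n t else 0)"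
  proof (intro sum.cong refl)
    fix n t assume "n \<in> {1..M}" "t \<in> {1..M}"
    then have "1 \<le> n * t" by simp
    then show "(if n * t \<le> M then h n t else 0) = (if n * t \<in> {1..M} then h n t else 0)" by simp
  qed
  also have "\<dots> = (\<Sum>m\<in>{1..M}. \<Sum>n\<in>{1..M}. \<Sum>t\<in>{1..M}. if n * t = m then h n t else 0)"
    by (rule sum_swap_delta[symmetric]) auto
  also have "\<dots> = (\<Sum>m\<in>{1..M}. \<Sum>d | d dvd m. h d (m div d))"
    by (intro sum.cong refl divsum_pairs[symmetric]) auto
  also have "\<dots> = (\<Sum>m\<in>{1..M}. a m * real_of_int (\<Sum>d | d dvd m. moebius d))"
  proof (intro sum.cong refl)
    fix m assume "m \<in> {1..M}"
    have "(\<Sum>d | d dvd m. h d (m div d)) = (\<Sum>d | d dvd m. a m * real_of_int (moebius d))"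
      by (intro sum.cong refl) (auto simp: h_def)
    then show "(\<Sum>d | d dvd m. h d (m div d)) = a m * real_of_int (\<Sum>d | d dvd m. moebius d)"
      by (simp add: sum_distrib_left)
  qed
  also have "\<dots> = (\<Sum>m\<in>{1..M}. if m = 1 then a m else 0)"
  proof (intro sum.cong refl)
    fix m assume m: "m \<in> {1..M}"
    show "a m * real_of_int (\<Sum>d | d dvd m. moebius d) = (if m = 1 then a m else 0)"
    proof (cases "m = 1")
      case True
      have "{d. d dvd (1::nat)} = {1}" by auto
      then show ?thesis using True by (simp add: moebius_def)
    next
      case False
      then have "m > 1" using m by auto
      then show ?thesis using False moebius_divisor_sum by simp
    qed
  qed
  also have "\<dots> = 1" using M a1 by simp
  finally show ?thesis .
qed

lemma div_filterlim:
  assumes t: "t > (0::nat)"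
  shows "filterlim (\<lambda>M. M div t) sequentially sequentially"
  unfolding filterlim_at_top
proof
  fix Z
  show "eventually (\<lambda>M. Z \<le> M div t) sequentially"
    unfolding eventually_sequentially
    using t by (intro exI[of _ "Z * t"]) (auto simp: less_eq_div_iff_mult_less_eq)
qed

lemma gfun_1: "gfun 1 = 1" by (simp add: gfun_def)

lemma main_abstract:
  fixes a :: "nat \<Rightarrow> real" and D y :: real and r :: nat
  assumes a1: "a 1 = 1" and a0: "\<And>m. 0 \<le> a m"
    and abd: "\<And>m. 1 \<le> m \<Longrightarrow> a m \<le> D * gfun m / real m ^ (r - 1)"
    and r: "1 \<le> r" and y: "1 \<le> y"
  shows "(\<forall>t\<ge>1. summable (\<lambda>n. real_of_int (moebius (Suc n)) * a (Suc n * t)))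
     \<and> \<bar>(\<Sum>t\<in>{1..nat \<lfloor>y\<rfloor>}. \<Sum>n. real_of_int (moebius (Suc n)) * a (Suc n * t)) - 1\<bar> \<le> 32 * D / y ^ r"
proof -
  have D1: "1 \<le> D" using abd[of 1] a1 by (simp add: gfun_def)
  have abd2: "a (n * t) \<le> D * gfun n * gfun t / real T ^ (r - 1)"
    if n: "1 \<le> n" and T: "1 \<le> T" "T \<le> t" for n t T
  proof -
    have nt: "1 \<le> n * t" using n T by simp
    have "real T ^ (r - 1) \<le> real (n * t) ^ (r - 1)"
      using n T by (intro power_mono) (auto intro: order_trans[of _ t] simp del: of_nat_mult)
    moreover have "0 < real T ^ (r - 1)" using T by simp
    moreover have "0 < real (n * t) ^ (r - 1)" using nt by simp
    ultimately have "D * gfun (n*t) / real (n * t) ^ (r - 1) \<le> D * gfun (n*t) / real T ^ (r - 1)"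
      using D1 gfun_nonneg[of "n*t"] by (intro divide_left_mono) (simp_all del: of_nat_mult)
    also have "\<dots> \<le> D * (gfun n * gfun t) / real T ^ (r - 1)"
      using D1 gfun_mult[of n t] \<open>0 < real T ^ (r - 1)\<close>
      by (intro divide_right_mono mult_left_mono) auto
    finally show ?thesis using abd[OF nt] by (simp add: mult.assoc)
  qed
  have gsumm: "summable (\<lambda>n. gfun (Suc n))"
  proof (rule summableI_nonneg_bounded)
    show "\<And>n. 0 \<le> gfun (Suc n)" by (rule gfun_nonneg)
    fix n
    have "(\<Sum>i<n. gfun (Suc i)) = (\<Sum>t\<in>{1..n}. gfun t)"
      using sum.atLeast1_atMost_eq[of gfun n] by simp
    then show "(\<Sum>i<n. gfun (Suc i)) \<le> 4" using gsum_total[of n] by simp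
  qed
  have summ: "summable (\<lambda>n. real_of_int (moebius (Suc n)) * a (Suc n * t))" if t: "t \<ge> 1" for t
  proof (rule summable_comparison_test')
    show "summable (\<lambda>n. (D * gfun t) * gfun (Suc n))" by (rule summable_mult[OF gsumm])
    fix n :: nat
    have "norm (real_of_int (moebius (Suc n)) * a (Suc n * t)) \<le> 1 * a (Suc n * t)"
      using moebius_mult_le[OF a0[of "Suc n * t"], of "Suc n"] by simp
    also have "\<dots> \<le> D * gfun (Suc n) * gfun t / real 1 ^ (r - 1)"
      using abd2[of "Suc n" 1 t] t by simp
    finally show "norm (real_of_int (moebius (Suc n)) * a (Suc n * t)) \<le> (D * gfun t) * gfun (Suc n)"
      by (simp add: mult_ac)
  qed
  define N where "N = nat \<lfloor>y\<rfloor>"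
  have N1: "1 \<le> N" using y unfolding N_def by linarith
  have Ny: "y \<le> real (N + 1)" unfolding N_def using y by linarith
  define P where "P M t = (\<Sum>n\<in>{1..M}. if n * t \<le> M then real_of_int (moebius n) * a (n * t) else 0)" for M t
  define F where "F t = (\<Sum>n. real_of_int (moebius (Suc n)) * a (Suc n * t))" for t
  define E where "E = 32 * D / real (N + 1) ^ r"
  have Ple: "\<bar>P M t\<bar> \<le> 4 * D * gfun t / real (N + 1) ^ (r - 1)" if t: "N + 1 \<le> t" for M t
  proof -
    have "\<bar>P M t\<bar> \<le> (\<Sum>n\<in>{1..M}. \<bar>if n * t \<le> M then real_of_int (moebius n) * a (n * t) else 0\<bar>)"
      unfolding P_def by (rule sum_abs)
    also have "\<dots> \<le> (\<Sum>n\<in>{1..M}. D * gfun n * gfun t / real (N + 1) ^ (r - 1))"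
    proof (rule sum_mono)
      fix n assume n: "n \<in> {1..M}"
      have "\<bar>real_of_int (moebius n) * a (n * t)\<bar> \<le> a (n * t)"
        by (rule moebius_mult_le[OF a0])
      also have "\<dots> \<le> D * gfun n * gfun t / real (N + 1) ^ (r - 1)"
        using abd2[of n "N+1" t] n t by simp
      finally show "\<bar>if n * t \<le> M then real_of_int (moebius n) * a (n * t) else 0\<bar> \<le> D * gfun n * gfun t / real (N + 1) ^ (r - 1)"
        using D1 by (auto intro: divide_nonneg_pos mult_nonneg_nonneg gfun_nonneg)
    qed
    also have "\<dots> = (D * gfun t / real (N + 1) ^ (r - 1)) * (\<Sum>n\<in>{1..M}. gfun n)"
      by (simp add: sum_distrib_left sum_divide_distrib mult_ac)
    also have "\<dots> \<le> (D * gfun t / real (N + 1) ^ (r - 1)) * 4"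
      using D1 gfun_nonneg[of t] by (intro mult_left_mono gsum_total) simp
    finally show ?thesis by (simp add: mult_ac)
  qed
  have tail: "\<bar>\<Sum>t\<in>{N+1..M}. P M t\<bar> \<le> E" for M
  proof -
    have "\<bar>\<Sum>t\<in>{N+1..M}. P M t\<bar> \<le> (\<Sum>t\<in>{N+1..M}. \<bar>P M t\<bar>)" by (rule sum_abs)
    also have "\<dots> \<le> (\<Sum>t\<in>{N+1..M}. 4 * D * gfun t / real (N + 1) ^ (r - 1))"
      by (rule sum_mono, rule Ple) simp
    also have "\<dots> = (4 * D / real (N + 1) ^ (r - 1)) * (\<Sum>t\<in>{N+1..M}. gfun t)"
      by (simp add: sum_distrib_left sum_divide_distrib mult_ac)
    also have "\<dots> \<le> (4 * D / real (N + 1) ^ (r - 1)) * (8 / real (N + 1))"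
      using D1 by (intro mult_left_mono gsum_tail) auto
    also have "\<dots> = E"
    proof -
      have "real (N + 1) ^ (r - 1) * real (N + 1) = real (N + 1) ^ r"
        using r by (metis Suc_diff_le diff_Suc_1 power_Suc2)
      then show ?thesis unfolding E_def by (simp add: field_simps)
    qed
    finally show ?thesis .
  qed
  have ident: "(\<Sum>t\<in>{1..N}. P M t) - 1 = - (\<Sum>t\<in>{N+1..M}. P M t)" if M: "N \<le> M" for M
  proof -
    have "{1..M} = {1..N} \<union> {N+1..M}" using M N1 by auto
    moreover have "{1..N} \<inter> {N+1..M} = {}" by auto
    ultimately have "(\<Sum>t\<in>{1..M}. P M t) = (\<Sum>t\<in>{1..N}. P M t) + (\<Sum>t\<in>{N+1..M}. P M t)"
      by (simp add: sum.union_disjoint)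
    moreover have "(\<Sum>t\<in>{1..M}. P M t) = 1"
      unfolding P_def using finite_identity[of a M, OF a1] M N1 by simp
    ultimately show ?thesis by simp
  qed
  have lim: "(\<lambda>M. P M t) \<longlonglongrightarrow> F t" if t: "t \<ge> 1" for t
  proof -
    have eq: "P M t = (\<Sum>n<M div t. real_of_int (moebius (Suc n)) * a (Suc n * t))" for M
    proof -
      have s: "{n\<in>{1..M}. n * t \<le> M} = {1..M div t}"
      proof -
        have iff: "\<And>n. (n * t \<le> M) = (n \<le> M div t)" using t by (simp add: less_eq_div_iff_mult_less_eq)
        have le: "M div t \<le> M" by (rule div_le_dividend)
        show ?thesis unfolding iff using le by (auto intro: order_trans)
      qed
      have "P M t = (\<Sum>n\<in>{n\<in>{1..M}. n * t \<le> M}. real_of_int (moebius n) * a (n * t))"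
        unfolding P_def by (rule sum.inter_filter[symmetric]) simp
      also have "\<dots> = (\<Sum>n\<in>{1..M div t}. real_of_int (moebius n) * a (n * t))" by (simp only: s)
      also have "\<dots> = (\<Sum>n<M div t. real_of_int (moebius (Suc n)) * a (Suc n * t))"
        unfolding One_nat_def by (rule sum.atLeast1_atMost_eq)
      finally show ?thesis .
    qed
    have "(\<lambda>k. \<Sum>n<k. real_of_int (moebius (Suc n)) * a (Suc n * t)) \<longlonglongrightarrow> F t"
      unfolding F_def by (rule summable_LIMSEQ[OF summ[OF t]])
    then have "(\<lambda>M. \<Sum>n<M div t. real_of_int (moebius (Suc n)) * a (Suc n * t)) \<longlonglongrightarrow> F t"
      by (rule filterlim_compose) (rule div_filterlim, use t in simp)
    then show ?thesis unfolding eq .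
  qed
  have "(\<lambda>M. \<bar>(\<Sum>t\<in>{1..N}. P M t) - 1\<bar>) \<longlonglongrightarrow> \<bar>(\<Sum>t\<in>{1..N}. F t) - 1\<bar>"
    by (intro tendsto_rabs tendsto_diff tendsto_sum tendsto_const lim) auto
  moreover have "\<exists>M0. \<forall>M\<ge>M0. \<bar>(\<Sum>t\<in>{1..N}. P M t) - 1\<bar> \<le> E"
    using ident tail by (intro exI[of _ N]) auto
  ultimately have "\<bar>(\<Sum>t\<in>{1..N}. F t) - 1\<bar> \<le> E" by (rule LIMSEQ_le_const2)
  also have "E \<le> 32 * D / y ^ r"
    unfolding E_def using D1 y Ny by (intro divide_left_mono power_mono) auto
  finally show ?thesis using summ unfolding F_def N_def by auto
qed

lemma kummer_1:
  assumes K: "number_field K" and G: "mult_subgroup K G"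
  shows "kummer_field K G 1 = K"
proof -
  have sub: "is_subfield K" using K by (simp add: number_field_def)
  have GK: "G \<subseteq> K" using G by (auto simp: mult_subgroup_def)
  have c: "cis (2 * pi / real 1) = 1" by simp
  have S: "K \<union> {cis (2 * pi / real 1)} \<union> {x. x ^ 1 \<in> G} = K \<union> {1} \<union> G" by (simp only: c) simp
  have oneK: "1 \<in> K" using sub by (simp add: is_subfield_def)
  have "gen_field (K \<union> {1} \<union> G) = K"
  proof
    show "gen_field (K \<union> {1} \<union> G) \<subseteq> K"
      unfolding gen_field_def using sub oneK GK by blast
    show "K \<subseteq> gen_field (K \<union> {1} \<union> G)"
      unfolding gen_field_def by blast
  qed
  then show ?thesis unfolding kummer_field_def S .
qed

lemma ext_degree_self:
  assumes sub: "is_subfield K"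
  shows "ext_degree K K = 1"
proof -
  have oneK: "1 \<in> K" using sub by (simp add: is_subfield_def)
  have b1: "is_basis_over K K {1}"
    unfolding is_basis_over_def using oneK by auto
  have no0: "\<not> (is_basis_over K K B \<and> card B = 0)" for B
  proof
    assume h: "is_basis_over K K B \<and> card B = 0"
    then have "finite B" by (simp add: is_basis_over_def)
    then have "B = {}" using h by simp
    then show False using h oneK unfolding is_basis_over_def by auto
  qed
  have ex: "\<exists>B. is_basis_over K K B \<and> card B = 1" using b1 by (intro exI[of _ "{1}"]) simp
  show ?thesis unfolding ext_degree_def
  proof (rule Least_equality)
    show "\<exists>B. is_basis_over K K B \<and> card B = 1" by (rule ex)
    fix y assume "\<exists>B. is_basis_over K K B \<and> card B = y"
    then show "1 \<le> y" using no0 by (cases y) auto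
  qed
qed

theorem lemma2p3:
  "\<exists>c::real. \<forall>K G r D (y::real).
     number_field K \<and> mult_subgroup K G \<and> fin_gen G \<and> torsion_free G \<and> has_rank G r \<and> r > 0
     \<and> (\<forall>n\<ge>1. C_const K G r n \<le> D) \<and> y \<ge> 1 \<longrightarrow>
       (\<forall>t\<ge>1. summable (\<lambda>n. real_of_int (moebius (Suc n))
                 / real (ext_degree (kummer_field K G (Suc n * t)) K)))
     \<and> \<bar>(\<Sum>t\<in>{1..nat \<lfloor>y\<rfloor>}. \<Sum>n. real_of_int (moebius (Suc n))
                 / real (ext_degree (kummer_field K G (Suc n * t)) K)) - 1\<bar> \<le> c * D / y ^ r"
proof (intro exI[of _ 32] allI impI)
  fix K G r D and y :: real
  assume h: "number_field K \<and> mult_subgroup K G \<and> fin_gen G \<and> torsion_free G \<and> has_rank G r \<and> r > 0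
     \<and> (\<forall>n\<ge>1. C_const K G r n \<le> D) \<and> y \<ge> 1"
  define a where "a m = 1 / real (ext_degree (kummer_field K G m) K)" for m
  have K: "number_field K" and G: "mult_subgroup K G" and r: "1 \<le> r" and CD: "\<And>n. 1 \<le> n \<Longrightarrow> C_const K G r n \<le> D"
    and y: "1 \<le> y" using h by auto
  have sub: "is_subfield K" using K by (simp add: number_field_def)
  have deg1: "ext_degree (kummer_field K G 1) K = 1"
    using kummer_1[OF K G] ext_degree_self[OF sub] by simp
  have a1: "a 1 = 1" unfolding a_def deg1 by simp
  have a0: "\<And>m. 0 \<le> a m" by (simp add: a_def)
  have D1: "1 \<le> D" using CD[of 1] unfolding C_const_def deg1 by simp
  have abd: "a m \<le> D * gfun m / real m ^ (r - 1)" if m: "1 \<le> m" for m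
  proof (cases "ext_degree (kummer_field K G m) K = 0")
    case True
    then show ?thesis using D1 gfun_nonneg[of m] by (simp add: a_def)
  next
    case False
    define d where "d = real (ext_degree (kummer_field K G m) K)"
    have dpos: "d > 0" using False by (simp add: d_def)
    have phi: "real (totient m) > 0" using m by simp
    have mpos: "real m > 0" using m by simp
    have pow: "real m ^ r = real m * real m ^ (r - 1)"
      using r by (metis Suc_diff_le diff_Suc_1 power_Suc)
    have "real (totient m) * real m ^ r / d \<le> D" using CD[OF m] by (simp add: C_const_def d_def)
    then have "real (totient m) * real m ^ r \<le> D * d" using dpos by (simp add: divide_le_eq)
    then have "1 / d \<le> D / (real (totient m) * real m ^ r)"
      using dpos phi mpos by (simp add: field_simps)
    also have "\<dots> = D * gfun m / real m ^ (r - 1)"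
      unfolding gfun_def pow by (simp add: field_simps)
    finally show ?thesis by (simp add: a_def d_def)
  qed
  have res: "(\<forall>t\<ge>1. summable (\<lambda>n. real_of_int (moebius (Suc n)) * a (Suc n * t)))
     \<and> \<bar>(\<Sum>t\<in>{1..nat \<lfloor>y\<rfloor>}. \<Sum>n. real_of_int (moebius (Suc n)) * a (Suc n * t)) - 1\<bar> \<le> 32 * D / y ^ r"
    by (rule main_abstract[OF a1 a0 abd r y]) auto
  have eqf: "\<And>n t. real_of_int (moebius (Suc n)) / real (ext_degree (kummer_field K G (Suc n * t)) K)
       = real_of_int (moebius (Suc n)) * a (Suc n * t)"
    by (simp add: a_def)
  show "(\<forall>t\<ge>1. summable (\<lambda>n. real_of_int (moebius (Suc n))
                 / real (ext_degree (kummer_field K G (Suc n * t)) K)))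
     \<and> \<bar>(\<Sum>t\<in>{1..nat \<lfloor>y\<rfloor>}. \<Sum>n. real_of_int (moebius (Suc n))
                 / real (ext_degree (kummer_field K G (Suc n * t)) K)) - 1\<bar> \<le> 32 * D / y ^ r"
    unfolding eqf by (rule res)
qed

end
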